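(* Let $S_3$ be the simple undirected graph on vertex set $\{1,2,\dots,16\}$ whose edges are the path edges $\{j,j+1\}$ for $j=1,\dots,15$ together with the five edges $\{1,5\},\{1,13\},\{3,12\},\{4,8\},\{9,16\}$. Designate incoming vertices $i_1=1,\ i_2=6,\ i_3=8$ and outgoing vertices $o_1=16,\ o_2=11,\ o_3=14$. Let $G$ be any finite simple undirected graph that contains $S_3$ as an induced subgraph, has at least one vertex not in $S_3$, and is such that every edge of $G$ joining a vertex of $S_3$ to a vertex outside $S_3$ has its endpoint in $S_3$ belonging to $\{i_1,i_2,i_3,o_1,o_2,o_3\}$. Then for every Hamiltonian cycle $H$ of $G$, the edges of $H$ having both endpoints in $S_3$ form a single path that visits every vertex of $S_3$ (i.e. $H$ enters $S_3$ exactly once, traverses all of it, and leaves), and the two endpoints of this path are $i_k$ and $o_k$ for some $k\in\{1,2,3\}$.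
   Context: A Hamiltonian cycle of a graph is a cycle passing through every vertex exactly once. This is the "in-out property" for the subgraph $S_3$: each copy of it behaves like a single vertex in any Hamiltonian cycle, and a cycle entering at the $k$-th incoming vertex must leave at the $k$-th outgoing vertex. *)

theory Defs
  imports Main
begin

definition S3_base_edge :: "nat \<Rightarrow> nat \<Rightarrow> bool" where
  "S3_base_edge i j \<longleftrightarrow>
     (1 \<le> i \<and> i \<le> 15 \<and> j = i + 1) \<or>
     (i, j) \<in> {(1,5), (1,13), (3,12), (4,8), (9,16)}"

definition S3_edge :: "nat \<Rightarrow> nat \<Rightarrow> bool" where
  "S3_edge i j \<longleftrightarrow> S3_base_edge i j \<or> S3_base_edge j i"

definition S3_verts :: "nat set" where
  "S3_verts = {1..16}"

fun S3_in :: "nat \<Rightarrow> nat" where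
  "S3_in (Suc 0) = 1" | "S3_in (Suc (Suc 0)) = 6" | "S3_in _ = 8"

fun S3_out :: "nat \<Rightarrow> nat" where
  "S3_out (Suc 0) = 16" | "S3_out (Suc (Suc 0)) = 11" | "S3_out _ = 14"

definition S3_terminals :: "nat set" where
  "S3_terminals = {1, 6, 8, 16, 11, 14}"

definition simple_graph :: "'a set \<Rightarrow> ('a \<Rightarrow> 'a \<Rightarrow> bool) \<Rightarrow> bool" where
  "simple_graph V E \<longleftrightarrow> finite V \<and>
     (\<forall>x y. E x y \<longrightarrow> x \<in> V \<and> y \<in> V \<and> x \<noteq> y \<and> E y x)"

definition ham_cycle :: "'a set \<Rightarrow> ('a \<Rightarrow> 'a \<Rightarrow> bool) \<Rightarrow> 'a list \<Rightarrow> bool" where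
  "ham_cycle V E cs \<longleftrightarrow> distinct cs \<and> set cs = V \<and> length cs \<ge> 3 \<and>
     (\<forall>i < length cs. E (cs ! i) (cs ! ((i + 1) mod length cs)))"

definition cycle_edges :: "'a list \<Rightarrow> 'a set set" where
  "cycle_edges cs = {{cs ! i, cs ! ((i + 1) mod length cs)} | i. i < length cs}"

definition path_edges :: "'a list \<Rightarrow> 'a set set" where
  "path_edges ps = {{ps ! i, ps ! (i + 1)} | i. i + 1 < length ps}"

end

theory Submission imports Defs begin

lemma S3_base_iff: "S3_base_edge i j \<longleftrightarrow> (i = 1 \<and> j = 2) \<or> (i = 2 \<and> j = 3) \<or> (i = 3 \<and> j = 4) \<or> (i = 4 \<and> j = 5) \<or> (i = 5 \<and> j = 6) \<or> (i = 6 \<and> j = 7) \<or> (i = 7 \<and> j = 8) \<or> (i = 8 \<and> j = 9) \<or> (i = 9 \<and> j = 10) \<or> (i = 10 \<and> j = 11) \<or> (i = 11 \<and> j = 12) \<or> (i = 12 \<and> j = 13) \<or> (i = 13 \<and> j = 14) \<or> (i = 14 \<and> j = 15) \<or> (i = 15 \<and> j = 16) \<or> (i = 1 \<and> j = 5) \<or> (i = 1 \<and> j = 13) \<or> (i = 3 \<and> j = 12) \<or> (i = 4 \<and> j = 8) \<or> (i = 9 \<and> j = 16)"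
proof
  assume "S3_base_edge i j"
  then consider "1 \<le> i" "i \<le> 15" "j = i + 1" | "(i, j) \<in> {(1,5), (1,13), (3,12), (4,8), (9,16)}"
    unfolding S3_base_edge_def by blast
  then show "(i = 1 \<and> j = 2) \<or> (i = 2 \<and> j = 3) \<or> (i = 3 \<and> j = 4) \<or> (i = 4 \<and> j = 5) \<or> (i = 5 \<and> j = 6) \<or> (i = 6 \<and> j = 7) \<or> (i = 7 \<and> j = 8) \<or> (i = 8 \<and> j = 9) \<or> (i = 9 \<and> j = 10) \<or> (i = 10 \<and> j = 11) \<or> (i = 11 \<and> j = 12) \<or> (i = 12 \<and> j = 13) \<or> (i = 13 \<and> j = 14) \<or> (i = 14 \<and> j = 15) \<or> (i = 15 \<and> j = 16) \<or> (i = 1 \<and> j = 5) \<or> (i = 1 \<and> j = 13) \<or> (i = 3 \<and> j = 12) \<or> (i = 4 \<and> j = 8) \<or> (i = 9 \<and> j = 16)"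
  proof cases
    case 1
    then have "i = 1 \<or> i = 2 \<or> i = 3 \<or> i = 4 \<or> i = 5 \<or> i = 6 \<or> i = 7 \<or> i = 8 \<or> i = 9 \<or> i = 10 \<or> i = 11 \<or> i = 12 \<or> i = 13 \<or> i = 14 \<or> i = 15" by arith
    then show ?thesis using 1 by (elim disjE) simp_all
  next
    case 2 then show ?thesis by simp
  qed
next
  assume "(i = 1 \<and> j = 2) \<or> (i = 2 \<and> j = 3) \<or> (i = 3 \<and> j = 4) \<or> (i = 4 \<and> j = 5) \<or> (i = 5 \<and> j = 6) \<or> (i = 6 \<and> j = 7) \<or> (i = 7 \<and> j = 8) \<or> (i = 8 \<and> j = 9) \<or> (i = 9 \<and> j = 10) \<or> (i = 10 \<and> j = 11) \<or> (i = 11 \<and> j = 12) \<or> (i = 12 \<and> j = 13) \<or> (i = 13 \<and> j = 14) \<or> (i = 14 \<and> j = 15) \<or> (i = 15 \<and> j = 16) \<or> (i = 1 \<and> j = 5) \<or> (i = 1 \<and> j = 13) \<or> (i = 3 \<and> j = 12) \<or> (i = 4 \<and> j = 8) \<or> (i = 9 \<and> j = 16)"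
  then show "S3_base_edge i j" unfolding S3_base_edge_def by (elim disjE) simp_all
qed

lemma S3_edge_iff: "S3_edge v u \<longleftrightarrow> (v = 1 \<and> (u = 2 \<or> u = 5 \<or> u = 13)) \<or> (v = 2 \<and> (u = 1 \<or> u = 3)) \<or> (v = 3 \<and> (u = 2 \<or> u = 4 \<or> u = 12)) \<or> (v = 4 \<and> (u = 3 \<or> u = 5 \<or> u = 8)) \<or> (v = 5 \<and> (u = 1 \<or> u = 4 \<or> u = 6)) \<or> (v = 6 \<and> (u = 5 \<or> u = 7)) \<or> (v = 7 \<and> (u = 6 \<or> u = 8)) \<or> (v = 8 \<and> (u = 4 \<or> u = 7 \<or> u = 9)) \<or> (v = 9 \<and> (u = 8 \<or> u = 10 \<or> u = 16)) \<or> (v = 10 \<and> (u = 9 \<or> u = 11)) \<or> (v = 11 \<and> (u = 10 \<or> u = 12)) \<or> (v = 12 \<and> (u = 3 \<or> u = 11 \<or> u = 13)) \<or> (v = 13 \<and> (u = 1 \<or> u = 12 \<or> u = 14)) \<or> (v = 14 \<and> (u = 13 \<or> u = 15)) \<or> (v = 15 \<and> (u = 14 \<or> u = 16)) \<or> (v = 16 \<and> (u = 9 \<or> u = 15))"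
  unfolding S3_edge_def S3_base_iff by (rule iffI; elim disjE conjE; simp)

definition conf1 :: "(nat \<Rightarrow> nat \<Rightarrow> bool) \<Rightarrow> bool" where
  "conf1 x \<longleftrightarrow> (x 1 2 \<and> x 2 3 \<and> x 3 4 \<and> x 4 5 \<and> x 5 6 \<and> x 6 7 \<and> x 7 8 \<and> x 8 9 \<and> x 9 10 \<and> x 10 11 \<and> x 11 12 \<and> x 12 13 \<and> x 13 14 \<and> x 14 15 \<and> x 15 16 \<and> \<not> x 1 5 \<and> \<not> x 1 13 \<and> \<not> x 3 12 \<and> \<not> x 4 8 \<and> \<not> x 9 16)"

definition conf2 :: "(nat \<Rightarrow> nat \<Rightarrow> bool) \<Rightarrow> bool" where
  "conf2 x \<longleftrightarrow> (x 1 2 \<and> x 2 3 \<and> x 3 4 \<and> x 4 5 \<and> x 5 6 \<and> x 6 7 \<and> x 7 8 \<and> \<not> x 8 9 \<and> x 9 10 \<and> x 10 11 \<and> x 11 12 \<and> x 12 13 \<and> \<not> x 13 14 \<and> x 14 15 \<and> x 15 16 \<and> \<not> x 1 5 \<and> x 1 13 \<and> \<not> x 3 12 \<and> \<not> x 4 8 \<and> x 9 16)"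

definition conf3 :: "(nat \<Rightarrow> nat \<Rightarrow> bool) \<Rightarrow> bool" where
  "conf3 x \<longleftrightarrow> (x 1 2 \<and> x 2 3 \<and> \<not> x 3 4 \<and> x 4 5 \<and> \<not> x 5 6 \<and> x 6 7 \<and> x 7 8 \<and> \<not> x 8 9 \<and> x 9 10 \<and> x 10 11 \<and> \<not> x 11 12 \<and> x 12 13 \<and> x 13 14 \<and> x 14 15 \<and> x 15 16 \<and> x 1 5 \<and> \<not> x 1 13 \<and> x 3 12 \<and> x 4 8 \<and> x 9 16)"


lemma comb_lits:
  fixes x :: "nat \<Rightarrow> nat \<Rightarrow> bool"
  assumes degN: "\<And>v. v \<in> S3_verts \<Longrightarrow> v \<notin> S3_terminals \<Longrightarrow> \<exists>a b. a \<noteq> b \<and> S3_edge v a \<and> S3_edge v b \<and> (\<forall>u. S3_edge v u \<longrightarrow> (x v u \<longleftrightarrow> u = a \<or> u = b))"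
    and degT: "\<And>v. v \<in> S3_terminals \<Longrightarrow> \<exists>a b. \<forall>u. S3_edge v u \<longrightarrow> x v u \<longrightarrow> u = a \<or> u = b"
    and sym: "\<And>u v. x u v = x v u"
    and cyc: "\<And>C. C \<subseteq> S3_verts \<Longrightarrow> C \<noteq> {} \<Longrightarrow> \<forall>w\<in>C. \<exists>a\<in>C. \<exists>b\<in>C. a \<noteq> b \<and> x w a \<and> x w b \<Longrightarrow> False"
  shows "conf1 x \<or> conf2 x \<or> conf3 x"
proof -
  have v1: "\<not> (x 1 2 \<and> x 1 5 \<and> x 1 13)"
  proof -
    have "\<exists>a b. \<forall>u. S3_edge 1 u \<longrightarrow> x 1 u \<longrightarrow> u = a \<or> u = b"
      by (rule degT[of 1]) (simp add: S3_terminals_def)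
    then obtain a b where h: "\<forall>u. S3_edge 1 u \<longrightarrow> x 1 u \<longrightarrow> u = a \<or> u = b"
      by blast
    have "x 1 2 \<longrightarrow> 2 = a \<or> 2 = b" "x 1 5 \<longrightarrow> 5 = a \<or> 5 = b" "x 1 13 \<longrightarrow> 13 = a \<or> 13 = b" using h by (simp_all add: S3_edge_iff)
    then show ?thesis by auto
  qed
  have v2: "x 1 2 \<and> x 2 3"
  proof -
    have "\<exists>a b. a \<noteq> b \<and> S3_edge 2 a \<and> S3_edge 2 b \<and> (\<forall>u. S3_edge 2 u \<longrightarrow> (x 2 u \<longleftrightarrow> u = a \<or> u = b))"
      by (rule degN[of 2]) (simp_all add: S3_verts_def S3_terminals_def)
    then obtain a b where ab: "a \<noteq> b" "S3_edge 2 a" "S3_edge 2 b" and h: "\<forall>u. S3_edge 2 u \<longrightarrow> (x 2 u \<longleftrightarrow> u = a \<or> u = b)"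
      by blast
    have "x 2 1 \<longleftrightarrow> 1 = a \<or> 1 = b" "x 2 3 \<longleftrightarrow> 3 = a \<or> 3 = b" using h by (simp_all add: S3_edge_iff)
    then show ?thesis using ab sym[of 2 1] by (auto simp: S3_edge_iff)
  qed
  have v3: "(x 2 3 \<and> x 3 4 \<and> \<not> x 3 12) \<or> (x 2 3 \<and> \<not> x 3 4 \<and> x 3 12) \<or> (\<not> x 2 3 \<and> x 3 4 \<and> x 3 12)"
  proof -
    have "\<exists>a b. a \<noteq> b \<and> S3_edge 3 a \<and> S3_edge 3 b \<and> (\<forall>u. S3_edge 3 u \<longrightarrow> (x 3 u \<longleftrightarrow> u = a \<or> u = b))"
      by (rule degN[of 3]) (simp_all add: S3_verts_def S3_terminals_def)
    then obtain a b where ab: "a \<noteq> b" "S3_edge 3 a" "S3_edge 3 b" and h: "\<forall>u. S3_edge 3 u \<longrightarrow> (x 3 u \<longleftrightarrow> u = a \<or> u = b)"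
      by blast
    have "x 3 2 \<longleftrightarrow> 2 = a \<or> 2 = b" "x 3 4 \<longleftrightarrow> 4 = a \<or> 4 = b" "x 3 12 \<longleftrightarrow> 12 = a \<or> 12 = b" using h by (simp_all add: S3_edge_iff)
    then show ?thesis using ab sym[of 3 2] by (auto simp: S3_edge_iff)
  qed
  have v4: "(x 3 4 \<and> x 4 5 \<and> \<not> x 4 8) \<or> (x 3 4 \<and> \<not> x 4 5 \<and> x 4 8) \<or> (\<not> x 3 4 \<and> x 4 5 \<and> x 4 8)"
  proof -
    have "\<exists>a b. a \<noteq> b \<and> S3_edge 4 a \<and> S3_edge 4 b \<and> (\<forall>u. S3_edge 4 u \<longrightarrow> (x 4 u \<longleftrightarrow> u = a \<or> u = b))"
      by (rule degN[of 4]) (simp_all add: S3_verts_def S3_terminals_def)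
    then obtain a b where ab: "a \<noteq> b" "S3_edge 4 a" "S3_edge 4 b" and h: "\<forall>u. S3_edge 4 u \<longrightarrow> (x 4 u \<longleftrightarrow> u = a \<or> u = b)"
      by blast
    have "x 4 3 \<longleftrightarrow> 3 = a \<or> 3 = b" "x 4 5 \<longleftrightarrow> 5 = a \<or> 5 = b" "x 4 8 \<longleftrightarrow> 8 = a \<or> 8 = b" using h by (simp_all add: S3_edge_iff)
    then show ?thesis using ab sym[of 4 3] by (auto simp: S3_edge_iff)
  qed
  have v5: "(x 1 5 \<and> x 4 5 \<and> \<not> x 5 6) \<or> (x 1 5 \<and> \<not> x 4 5 \<and> x 5 6) \<or> (\<not> x 1 5 \<and> x 4 5 \<and> x 5 6)"
  proof -
    have "\<exists>a b. a \<noteq> b \<and> S3_edge 5 a \<and> S3_edge 5 b \<and> (\<forall>u. S3_edge 5 u \<longrightarrow> (x 5 u \<longleftrightarrow> u = a \<or> u = b))"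
      by (rule degN[of 5]) (simp_all add: S3_verts_def S3_terminals_def)
    then obtain a b where ab: "a \<noteq> b" "S3_edge 5 a" "S3_edge 5 b" and h: "\<forall>u. S3_edge 5 u \<longrightarrow> (x 5 u \<longleftrightarrow> u = a \<or> u = b)"
      by blast
    have "x 5 1 \<longleftrightarrow> 1 = a \<or> 1 = b" "x 5 4 \<longleftrightarrow> 4 = a \<or> 4 = b" "x 5 6 \<longleftrightarrow> 6 = a \<or> 6 = b" using h by (simp_all add: S3_edge_iff)
    then show ?thesis using ab sym[of 5 1] sym[of 5 4] by (auto simp: S3_edge_iff)
  qed
  have v7: "x 6 7 \<and> x 7 8"
  proof -
    have "\<exists>a b. a \<noteq> b \<and> S3_edge 7 a \<and> S3_edge 7 b \<and> (\<forall>u. S3_edge 7 u \<longrightarrow> (x 7 u \<longleftrightarrow> u = a \<or> u = b))"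
      by (rule degN[of 7]) (simp_all add: S3_verts_def S3_terminals_def)
    then obtain a b where ab: "a \<noteq> b" "S3_edge 7 a" "S3_edge 7 b" and h: "\<forall>u. S3_edge 7 u \<longrightarrow> (x 7 u \<longleftrightarrow> u = a \<or> u = b)"
      by blast
    have "x 7 6 \<longleftrightarrow> 6 = a \<or> 6 = b" "x 7 8 \<longleftrightarrow> 8 = a \<or> 8 = b" using h by (simp_all add: S3_edge_iff)
    then show ?thesis using ab sym[of 7 6] by (auto simp: S3_edge_iff)
  qed
  have v8: "\<not> (x 4 8 \<and> x 7 8 \<and> x 8 9)"
  proof -
    have "\<exists>a b. \<forall>u. S3_edge 8 u \<longrightarrow> x 8 u \<longrightarrow> u = a \<or> u = b"
      by (rule degT[of 8]) (simp add: S3_terminals_def)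
    then obtain a b where h: "\<forall>u. S3_edge 8 u \<longrightarrow> x 8 u \<longrightarrow> u = a \<or> u = b"
      by blast
    have "x 8 4 \<longrightarrow> 4 = a \<or> 4 = b" "x 8 7 \<longrightarrow> 7 = a \<or> 7 = b" "x 8 9 \<longrightarrow> 9 = a \<or> 9 = b" using h by (simp_all add: S3_edge_iff)
    then show ?thesis using sym[of 8 4] sym[of 8 7] by auto
  qed
  have v9: "(x 8 9 \<and> x 9 10 \<and> \<not> x 9 16) \<or> (x 8 9 \<and> \<not> x 9 10 \<and> x 9 16) \<or> (\<not> x 8 9 \<and> x 9 10 \<and> x 9 16)"
  proof -
    have "\<exists>a b. a \<noteq> b \<and> S3_edge 9 a \<and> S3_edge 9 b \<and> (\<forall>u. S3_edge 9 u \<longrightarrow> (x 9 u \<longleftrightarrow> u = a \<or> u = b))"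
      by (rule degN[of 9]) (simp_all add: S3_verts_def S3_terminals_def)
    then obtain a b where ab: "a \<noteq> b" "S3_edge 9 a" "S3_edge 9 b" and h: "\<forall>u. S3_edge 9 u \<longrightarrow> (x 9 u \<longleftrightarrow> u = a \<or> u = b)"
      by blast
    have "x 9 8 \<longleftrightarrow> 8 = a \<or> 8 = b" "x 9 10 \<longleftrightarrow> 10 = a \<or> 10 = b" "x 9 16 \<longleftrightarrow> 16 = a \<or> 16 = b" using h by (simp_all add: S3_edge_iff)
    then show ?thesis using ab sym[of 9 8] by (auto simp: S3_edge_iff)
  qed
  have v10: "x 9 10 \<and> x 10 11"
  proof -
    have "\<exists>a b. a \<noteq> b \<and> S3_edge 10 a \<and> S3_edge 10 b \<and> (\<forall>u. S3_edge 10 u \<longrightarrow> (x 10 u \<longleftrightarrow> u = a \<or> u = b))"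
      by (rule degN[of 10]) (simp_all add: S3_verts_def S3_terminals_def)
    then obtain a b where ab: "a \<noteq> b" "S3_edge 10 a" "S3_edge 10 b" and h: "\<forall>u. S3_edge 10 u \<longrightarrow> (x 10 u \<longleftrightarrow> u = a \<or> u = b)"
      by blast
    have "x 10 9 \<longleftrightarrow> 9 = a \<or> 9 = b" "x 10 11 \<longleftrightarrow> 11 = a \<or> 11 = b" using h by (simp_all add: S3_edge_iff)
    then show ?thesis using ab sym[of 10 9] by (auto simp: S3_edge_iff)
  qed
  have v12: "(x 3 12 \<and> x 11 12 \<and> \<not> x 12 13) \<or> (x 3 12 \<and> \<not> x 11 12 \<and> x 12 13) \<or> (\<not> x 3 12 \<and> x 11 12 \<and> x 12 13)"
  proof -
    have "\<exists>a b. a \<noteq> b \<and> S3_edge 12 a \<and> S3_edge 12 b \<and> (\<forall>u. S3_edge 12 u \<longrightarrow> (x 12 u \<longleftrightarrow> u = a \<or> u = b))"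
      by (rule degN[of 12]) (simp_all add: S3_verts_def S3_terminals_def)
    then obtain a b where ab: "a \<noteq> b" "S3_edge 12 a" "S3_edge 12 b" and h: "\<forall>u. S3_edge 12 u \<longrightarrow> (x 12 u \<longleftrightarrow> u = a \<or> u = b)"
      by blast
    have "x 12 3 \<longleftrightarrow> 3 = a \<or> 3 = b" "x 12 11 \<longleftrightarrow> 11 = a \<or> 11 = b" "x 12 13 \<longleftrightarrow> 13 = a \<or> 13 = b" using h by (simp_all add: S3_edge_iff)
    then show ?thesis using ab sym[of 12 3] sym[of 12 11] by (auto simp: S3_edge_iff)
  qed
  have v13: "(x 1 13 \<and> x 12 13 \<and> \<not> x 13 14) \<or> (x 1 13 \<and> \<not> x 12 13 \<and> x 13 14) \<or> (\<not> x 1 13 \<and> x 12 13 \<and> x 13 14)"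
  proof -
    have "\<exists>a b. a \<noteq> b \<and> S3_edge 13 a \<and> S3_edge 13 b \<and> (\<forall>u. S3_edge 13 u \<longrightarrow> (x 13 u \<longleftrightarrow> u = a \<or> u = b))"
      by (rule degN[of 13]) (simp_all add: S3_verts_def S3_terminals_def)
    then obtain a b where ab: "a \<noteq> b" "S3_edge 13 a" "S3_edge 13 b" and h: "\<forall>u. S3_edge 13 u \<longrightarrow> (x 13 u \<longleftrightarrow> u = a \<or> u = b)"
      by blast
    have "x 13 1 \<longleftrightarrow> 1 = a \<or> 1 = b" "x 13 12 \<longleftrightarrow> 12 = a \<or> 12 = b" "x 13 14 \<longleftrightarrow> 14 = a \<or> 14 = b" using h by (simp_all add: S3_edge_iff)
    then show ?thesis using ab sym[of 13 1] sym[of 13 12] by (auto simp: S3_edge_iff)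
  qed
  have v15: "x 14 15 \<and> x 15 16"
  proof -
    have "\<exists>a b. a \<noteq> b \<and> S3_edge 15 a \<and> S3_edge 15 b \<and> (\<forall>u. S3_edge 15 u \<longrightarrow> (x 15 u \<longleftrightarrow> u = a \<or> u = b))"
      by (rule degN[of 15]) (simp_all add: S3_verts_def S3_terminals_def)
    then obtain a b where ab: "a \<noteq> b" "S3_edge 15 a" "S3_edge 15 b" and h: "\<forall>u. S3_edge 15 u \<longrightarrow> (x 15 u \<longleftrightarrow> u = a \<or> u = b)"
      by blast
    have "x 15 14 \<longleftrightarrow> 14 = a \<or> 14 = b" "x 15 16 \<longleftrightarrow> 16 = a \<or> 16 = b" using h by (simp_all add: S3_edge_iff)
    then show ?thesis using ab sym[of 15 14] by (auto simp: S3_edge_iff)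
  qed
  have c0: "\<not> (x 1 2 \<and> x 2 3 \<and> x 3 4 \<and> x 4 5 \<and> x 1 5)"
  proof
    assume A: "x 1 2 \<and> x 2 3 \<and> x 3 4 \<and> x 4 5 \<and> x 1 5"
    show False
      by (rule cyc[of "{1,2,3,4,5}"]) (use A sym[of 2 1] sym[of 3 2] sym[of 4 3] sym[of 5 4] sym[of 5 1] in \<open>auto simp: S3_verts_def\<close>)
  qed
  have c1: "\<not> (x 1 2 \<and> x 2 3 \<and> x 3 12 \<and> x 12 13 \<and> x 1 13)"
  proof
    assume A: "x 1 2 \<and> x 2 3 \<and> x 3 12 \<and> x 12 13 \<and> x 1 13"
    show False
      by (rule cyc[of "{1,2,3,12,13}"]) (use A sym[of 2 1] sym[of 3 2] sym[of 12 3] sym[of 13 12] sym[of 13 1] in \<open>auto simp: S3_verts_def\<close>)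
  qed
  have c2: "\<not> (x 1 2 \<and> x 2 3 \<and> x 3 12 \<and> x 11 12 \<and> x 10 11 \<and> x 9 10 \<and> x 9 16 \<and> x 15 16 \<and> x 14 15 \<and> x 13 14 \<and> x 1 13)"
  proof
    assume A: "x 1 2 \<and> x 2 3 \<and> x 3 12 \<and> x 11 12 \<and> x 10 11 \<and> x 9 10 \<and> x 9 16 \<and> x 15 16 \<and> x 14 15 \<and> x 13 14 \<and> x 1 13"
    show False
      by (rule cyc[of "{1,2,3,12,11,10,9,16,15,14,13}"]) (use A sym[of 2 1] sym[of 3 2] sym[of 12 3] sym[of 12 11] sym[of 11 10] sym[of 10 9] sym[of 16 9] sym[of 16 15] sym[of 15 14] sym[of 14 13] sym[of 13 1] in \<open>auto simp: S3_verts_def\<close>)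
  qed
  have c3: "\<not> (x 1 2 \<and> x 2 3 \<and> x 3 4 \<and> x 4 8 \<and> x 7 8 \<and> x 6 7 \<and> x 5 6 \<and> x 1 5)"
  proof
    assume A: "x 1 2 \<and> x 2 3 \<and> x 3 4 \<and> x 4 8 \<and> x 7 8 \<and> x 6 7 \<and> x 5 6 \<and> x 1 5"
    show False
      by (rule cyc[of "{1,2,3,4,8,7,6,5}"]) (use A sym[of 2 1] sym[of 3 2] sym[of 4 3] sym[of 8 4] sym[of 8 7] sym[of 7 6] sym[of 6 5] sym[of 5 1] in \<open>auto simp: S3_verts_def\<close>)
  qed
  have c4: "\<not> (x 1 2 \<and> x 2 3 \<and> x 3 4 \<and> x 4 5 \<and> x 5 6 \<and> x 6 7 \<and> x 7 8 \<and> x 8 9 \<and> x 9 10 \<and> x 10 11 \<and> x 11 12 \<and> x 12 13 \<and> x 1 13)"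
  proof
    assume A: "x 1 2 \<and> x 2 3 \<and> x 3 4 \<and> x 4 5 \<and> x 5 6 \<and> x 6 7 \<and> x 7 8 \<and> x 8 9 \<and> x 9 10 \<and> x 10 11 \<and> x 11 12 \<and> x 12 13 \<and> x 1 13"
    show False
      by (rule cyc[of "{1,2,3,4,5,6,7,8,9,10,11,12,13}"]) (use A sym[of 2 1] sym[of 3 2] sym[of 4 3] sym[of 5 4] sym[of 6 5] sym[of 7 6] sym[of 8 7] sym[of 9 8] sym[of 10 9] sym[of 11 10] sym[of 12 11] sym[of 13 12] sym[of 13 1] in \<open>auto simp: S3_verts_def\<close>)
  qed
  have c5: "\<not> (x 4 5 \<and> x 5 6 \<and> x 6 7 \<and> x 7 8 \<and> x 4 8)"
  proof
    assume A: "x 4 5 \<and> x 5 6 \<and> x 6 7 \<and> x 7 8 \<and> x 4 8"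
    show False
      by (rule cyc[of "{4,5,6,7,8}"]) (use A sym[of 5 4] sym[of 6 5] sym[of 7 6] sym[of 8 7] sym[of 8 4] in \<open>auto simp: S3_verts_def\<close>)
  qed
  have c6: "\<not> (x 9 10 \<and> x 10 11 \<and> x 11 12 \<and> x 12 13 \<and> x 13 14 \<and> x 14 15 \<and> x 15 16 \<and> x 9 16)"
  proof
    assume A: "x 9 10 \<and> x 10 11 \<and> x 11 12 \<and> x 12 13 \<and> x 13 14 \<and> x 14 15 \<and> x 15 16 \<and> x 9 16"
    show False
      by (rule cyc[of "{9,10,11,12,13,14,15,16}"]) (use A sym[of 10 9] sym[of 11 10] sym[of 12 11] sym[of 13 12] sym[of 14 13] sym[of 15 14] sym[of 16 15] sym[of 16 9] in \<open>auto simp: S3_verts_def\<close>)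
  qed
  show ?thesis using v1 v2 v3 v4 v5 v7 v8 v9 v10 v12 v13 v15 c0 c1 c2 c3 c4 c5 c6 unfolding conf1_def conf2_def conf3_def by (smt (verit))
qed

fun adjl :: "'a list \<Rightarrow> ('a \<times> 'a) list" where
  "adjl (a # b # xs) = (a, b) # adjl (b # xs)"
| "adjl _ = []"

lemma path_edges_Cons2: "path_edges (a # b # xs) = insert {a,b} (path_edges (b # xs))"
proof -
  have "path_edges (a # b # xs) = {{(a#b#xs) ! i, (a#b#xs) ! (i + 1)} | i. i + 1 < length (a#b#xs)}"
    by (simp add: path_edges_def)
  also have "\<dots> = insert {a,b} {{(b#xs) ! i, (b#xs) ! (i + 1)} | i. i + 1 < length (b#xs)}"
  proof (rule set_eqI, rule iffI)
    fix e assume "e \<in> {{(a#b#xs) ! i, (a#b#xs) ! (i + 1)} | i. i + 1 < length (a#b#xs)}"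
    then obtain i where i: "e = {(a#b#xs) ! i, (a#b#xs) ! (i + 1)}" "i + 1 < length (a#b#xs)" by blast
    show "e \<in> insert {a,b} {{(b#xs) ! i, (b#xs) ! (i + 1)} | i. i + 1 < length (b#xs)}"
    proof (cases i)
      case 0 then show ?thesis using i by simp
    next
      case (Suc j) then show ?thesis using i by auto
    qed
  next
    fix e assume "e \<in> insert {a,b} {{(b#xs) ! i, (b#xs) ! (i + 1)} | i. i + 1 < length (b#xs)}"
    then show "e \<in> {{(a#b#xs) ! i, (a#b#xs) ! (i + 1)} | i. i + 1 < length (a#b#xs)}"
    proof
      assume "e = {a,b}" then show ?thesis by (auto intro!: exI[of _ 0])
    next
      assume "e \<in> {{(b#xs) ! i, (b#xs) ! (i + 1)} | i. i + 1 < length (b#xs)}"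
      then obtain i where i: "e = {(b#xs) ! i, (b#xs) ! (i + 1)}" "i + 1 < length (b#xs)" by blast
      then show ?thesis by (auto intro!: exI[of _ "Suc i"])
    qed
  qed
  also have "\<dots> = insert {a,b} (path_edges (b # xs))" by (simp add: path_edges_def)
  finally show ?thesis .
qed

lemma path_edges_short: "length L \<le> 1 \<Longrightarrow> path_edges L = {}"
  by (auto simp: path_edges_def)

lemma path_edges_adjl: "{a,b} \<in> path_edges L \<longleftrightarrow> (a,b) \<in> set (adjl L) \<or> (b,a) \<in> set (adjl L)"
proof (induction L rule: adjl.induct)
  case (1 c d xs)
  then show ?case by (auto simp: path_edges_Cons2 doubleton_eq_iff)
next
  case ("2_1") then show ?case by (simp add: path_edges_short)
next
  case ("2_2" v) then show ?case by (simp add: path_edges_short)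
qed

lemma path_edges_sub: "e \<in> path_edges L \<Longrightarrow> e \<subseteq> set L"
  by (auto simp: path_edges_def)

lemma path_edges_map: "path_edges (map f L) = (\<lambda>e. f ` e) ` path_edges L"
proof (rule set_eqI, rule iffI)
  fix e assume "e \<in> path_edges (map f L)"
  then obtain i where "e = {map f L ! i, map f L ! (i+1)}" "i + 1 < length L"
    by (auto simp: path_edges_def)
  then show "e \<in> (\<lambda>e. f ` e) ` path_edges L"
    by (auto simp: path_edges_def intro!: image_eqI[of _ _ "{L ! i, L ! (i+1)}"])
next
  fix e assume "e \<in> (\<lambda>e. f ` e) ` path_edges L"
  then obtain i where "e = f ` {L ! i, L ! (i+1)}" "i + 1 < length L"
    by (auto simp: path_edges_def)
  then show "e \<in> path_edges (map f L)"
    by (auto simp: path_edges_def intro!: exI[of _ i])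
qed

lemma S3_verts_eq: "S3_verts = {1,2,3,4,5,6,7,8,9,10,11,12,13,14,15,16}"
  unfolding S3_verts_def by (auto simp: S3_verts_def) arith

lemma S3_io: "S3_in 1 = 1" "S3_out 1 = 16" "S3_in 2 = 6" "S3_out 2 = 11" "S3_in 3 = 8" "S3_out 3 = 14"
  by (simp_all add: numeral_eq_Suc)

lemma comb_paths:
  fixes x :: "nat \<Rightarrow> nat \<Rightarrow> bool"
  assumes degN: "\<And>v. v \<in> S3_verts \<Longrightarrow> v \<notin> S3_terminals \<Longrightarrow> \<exists>a b. a \<noteq> b \<and> S3_edge v a \<and> S3_edge v b \<and> (\<forall>u. S3_edge v u \<longrightarrow> (x v u \<longleftrightarrow> u = a \<or> u = b))"
    and degT: "\<And>v. v \<in> S3_terminals \<Longrightarrow> \<exists>a b. \<forall>u. S3_edge v u \<longrightarrow> x v u \<longrightarrow> u = a \<or> u = b"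
    and sym: "\<And>u v. x u v = x v u"
    and cyc: "\<And>C. C \<subseteq> S3_verts \<Longrightarrow> C \<noteq> {} \<Longrightarrow> \<forall>w\<in>C. \<exists>a\<in>C. \<exists>b\<in>C. a \<noteq> b \<and> x w a \<and> x w b \<Longrightarrow> False"
    and adj: "\<And>u v. x u v \<Longrightarrow> S3_edge u v"
  shows "\<exists>k \<in> {1, 2, 3}. \<exists>L. distinct L \<and> set L = S3_verts \<and>
           (\<forall>a b. x a b \<longleftrightarrow> {a,b} \<in> path_edges L) \<and> {hd L, last L} = {S3_in k, S3_out k}"
proof -
  have L: "conf1 x \<or> conf2 x \<or> conf3 x"
    by (rule comb_lits[of x]) (fact degN | fact degT | fact sym | fact cyc)+
  show ?thesis using L
  proof (elim disjE)
    assume "conf1 x"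
    then have h: "(x 1 2 \<and> x 2 3 \<and> x 3 4 \<and> x 4 5 \<and> x 5 6 \<and> x 6 7 \<and> x 7 8 \<and> x 8 9 \<and> x 9 10 \<and> x 10 11 \<and> x 11 12 \<and> x 12 13 \<and> x 13 14 \<and> x 14 15 \<and> x 15 16 \<and> \<not> x 1 5 \<and> \<not> x 1 13 \<and> \<not> x 3 12 \<and> \<not> x 4 8 \<and> \<not> x 9 16)" unfolding conf1_def .
    have hh: "x 1 2 \<and> x 2 1 \<and> x 2 3 \<and> x 3 2 \<and> x 3 4 \<and> x 4 3 \<and> x 4 5 \<and> x 5 4 \<and> x 5 6 \<and> x 6 5 \<and> x 6 7 \<and> x 7 6 \<and> x 7 8 \<and> x 8 7 \<and> x 8 9 \<and> x 9 8 \<and> x 9 10 \<and> x 10 9 \<and> x 10 11 \<and> x 11 10 \<and> x 11 12 \<and> x 12 11 \<and> x 12 13 \<and> x 13 12 \<and> x 13 14 \<and> x 14 13 \<and> x 14 15 \<and> x 15 14 \<and> x 15 16 \<and> x 16 15 \<and> \<not> x 1 5 \<and> \<not> x 5 1 \<and> \<not> x 1 13 \<and> \<not> x 13 1 \<and> \<not> x 3 12 \<and> \<not> x 12 3 \<and> \<not> x 4 8 \<and> \<not> x 8 4 \<and> \<not> x 9 16 \<and> \<not> x 16 9"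
      using h sym[of 2 1] sym[of 3 2] sym[of 4 3] sym[of 5 4] sym[of 6 5] sym[of 7 6] sym[of 8 7] sym[of 9 8] sym[of 10 9] sym[of 11 10] sym[of 12 11] sym[of 13 12] sym[of 14 13] sym[of 15 14] sym[of 16 15] sym[of 5 1] sym[of 13 1] sym[of 12 3] sym[of 8 4] sym[of 16 9] by simp
    let ?L = "[1, 2, 3, 4, 5, 6, 7, 8, 9, 10, 11, 12, 13, 14, 15, 16] :: nat list"
    have d1: "x a b" if "(a,b) \<in> set (adjl ?L)" for a b
      using that hh by auto
    have d2: "(a,b) \<in> set (adjl ?L) \<or> (b,a) \<in> set (adjl ?L)" if "x a b" for a b
      using adj[OF that] that hh unfolding S3_edge_iff by (elim disjE conjE; simp)
    have "\<forall>a b. x a b \<longleftrightarrow> {a,b} \<in> path_edges ?L"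
    proof (intro allI)
      fix a b
      show "x a b \<longleftrightarrow> {a,b} \<in> path_edges ?L"
        unfolding path_edges_adjl using d1[of a b] d1[of b a] d2[of a b] sym[of a b] by blast
    qed
    moreover have "distinct ?L \<and> set ?L = S3_verts" unfolding S3_verts_def by (simp, auto; presburger)
    ultimately show ?thesis by (intro bexI[of _ 1] exI[of _ ?L]) (simp_all add: S3_io)
  next
    assume "conf2 x"
    then have h: "(x 1 2 \<and> x 2 3 \<and> x 3 4 \<and> x 4 5 \<and> x 5 6 \<and> x 6 7 \<and> x 7 8 \<and> \<not> x 8 9 \<and> x 9 10 \<and> x 10 11 \<and> x 11 12 \<and> x 12 13 \<and> \<not> x 13 14 \<and> x 14 15 \<and> x 15 16 \<and> \<not> x 1 5 \<and> x 1 13 \<and> \<not> x 3 12 \<and> \<not> x 4 8 \<and> x 9 16)" unfolding conf2_def .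
    have hh: "x 1 2 \<and> x 2 1 \<and> x 2 3 \<and> x 3 2 \<and> x 3 4 \<and> x 4 3 \<and> x 4 5 \<and> x 5 4 \<and> x 5 6 \<and> x 6 5 \<and> x 6 7 \<and> x 7 6 \<and> x 7 8 \<and> x 8 7 \<and> \<not> x 8 9 \<and> \<not> x 9 8 \<and> x 9 10 \<and> x 10 9 \<and> x 10 11 \<and> x 11 10 \<and> x 11 12 \<and> x 12 11 \<and> x 12 13 \<and> x 13 12 \<and> \<not> x 13 14 \<and> \<not> x 14 13 \<and> x 14 15 \<and> x 15 14 \<and> x 15 16 \<and> x 16 15 \<and> \<not> x 1 5 \<and> \<not> x 5 1 \<and> x 1 13 \<and> x 13 1 \<and> \<not> x 3 12 \<and> \<not> x 12 3 \<and> \<not> x 4 8 \<and> \<not> x 8 4 \<and> x 9 16 \<and> x 16 9"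
      using h sym[of 2 1] sym[of 3 2] sym[of 4 3] sym[of 5 4] sym[of 6 5] sym[of 7 6] sym[of 8 7] sym[of 9 8] sym[of 10 9] sym[of 11 10] sym[of 12 11] sym[of 13 12] sym[of 14 13] sym[of 15 14] sym[of 16 15] sym[of 5 1] sym[of 13 1] sym[of 12 3] sym[of 8 4] sym[of 16 9] by simp
    let ?L = "[8, 7, 6, 5, 4, 3, 2, 1, 13, 12, 11, 10, 9, 16, 15, 14] :: nat list"
    have d1: "x a b" if "(a,b) \<in> set (adjl ?L)" for a b
      using that hh by auto
    have d2: "(a,b) \<in> set (adjl ?L) \<or> (b,a) \<in> set (adjl ?L)" if "x a b" for a b
      using adj[OF that] that hh unfolding S3_edge_iff by (elim disjE conjE; simp)
    have "\<forall>a b. x a b \<longleftrightarrow> {a,b} \<in> path_edges ?L"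
    proof (intro allI)
      fix a b
      show "x a b \<longleftrightarrow> {a,b} \<in> path_edges ?L"
        unfolding path_edges_adjl using d1[of a b] d1[of b a] d2[of a b] sym[of a b] by blast
    qed
    moreover have "distinct ?L \<and> set ?L = S3_verts" unfolding S3_verts_def by (simp, auto; presburger)
    ultimately show ?thesis by (intro bexI[of _ 3] exI[of _ ?L]) (simp_all add: S3_io)
  next
    assume "conf3 x"
    then have h: "(x 1 2 \<and> x 2 3 \<and> \<not> x 3 4 \<and> x 4 5 \<and> \<not> x 5 6 \<and> x 6 7 \<and> x 7 8 \<and> \<not> x 8 9 \<and> x 9 10 \<and> x 10 11 \<and> \<not> x 11 12 \<and> x 12 13 \<and> x 13 14 \<and> x 14 15 \<and> x 15 16 \<and> x 1 5 \<and> \<not> x 1 13 \<and> x 3 12 \<and> x 4 8 \<and> x 9 16)" unfolding conf3_def .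
    have hh: "x 1 2 \<and> x 2 1 \<and> x 2 3 \<and> x 3 2 \<and> \<not> x 3 4 \<and> \<not> x 4 3 \<and> x 4 5 \<and> x 5 4 \<and> \<not> x 5 6 \<and> \<not> x 6 5 \<and> x 6 7 \<and> x 7 6 \<and> x 7 8 \<and> x 8 7 \<and> \<not> x 8 9 \<and> \<not> x 9 8 \<and> x 9 10 \<and> x 10 9 \<and> x 10 11 \<and> x 11 10 \<and> \<not> x 11 12 \<and> \<not> x 12 11 \<and> x 12 13 \<and> x 13 12 \<and> x 13 14 \<and> x 14 13 \<and> x 14 15 \<and> x 15 14 \<and> x 15 16 \<and> x 16 15 \<and> x 1 5 \<and> x 5 1 \<and> \<not> x 1 13 \<and> \<not> x 13 1 \<and> x 3 12 \<and> x 12 3 \<and> x 4 8 \<and> x 8 4 \<and> x 9 16 \<and> x 16 9"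
      using h sym[of 2 1] sym[of 3 2] sym[of 4 3] sym[of 5 4] sym[of 6 5] sym[of 7 6] sym[of 8 7] sym[of 9 8] sym[of 10 9] sym[of 11 10] sym[of 12 11] sym[of 13 12] sym[of 14 13] sym[of 15 14] sym[of 16 15] sym[of 5 1] sym[of 13 1] sym[of 12 3] sym[of 8 4] sym[of 16 9] by simp
    let ?L = "[6, 7, 8, 4, 5, 1, 2, 3, 12, 13, 14, 15, 16, 9, 10, 11] :: nat list"
    have d1: "x a b" if "(a,b) \<in> set (adjl ?L)" for a b
      using that hh by auto
    have d2: "(a,b) \<in> set (adjl ?L) \<or> (b,a) \<in> set (adjl ?L)" if "x a b" for a b
      using adj[OF that] that hh unfolding S3_edge_iff by (elim disjE conjE; simp)
    have "\<forall>a b. x a b \<longleftrightarrow> {a,b} \<in> path_edges ?L"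
    proof (intro allI)
      fix a b
      show "x a b \<longleftrightarrow> {a,b} \<in> path_edges ?L"
        unfolding path_edges_adjl using d1[of a b] d1[of b a] d2[of a b] sym[of a b] by blast
    qed
    moreover have "distinct ?L \<and> set ?L = S3_verts" unfolding S3_verts_def by (simp, auto; presburger)
    ultimately show ?thesis by (intro bexI[of _ 2] exI[of _ ?L]) (simp_all add: S3_io)
  qed
qed

lemma S3_edge_verts: "S3_edge a b \<Longrightarrow> a \<in> S3_verts \<and> b \<in> S3_verts"
  unfolding S3_edge_iff S3_verts_def by (elim disjE conjE; simp)

lemma mod_prev_succ:
  fixes i n :: nat
  assumes "i < n"
  shows "((i + n - 1) mod n + 1) mod n = i"
proof (cases i)
  case 0
  have "n - 1 < n" using assms by simp
  then have "(n - 1) mod n = n - 1" by (rule mod_less)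
  moreover have "(n - 1 + 1) mod n = 0" using assms by simp
  ultimately show ?thesis using 0 by simp
next
  case (Suc m)
  have "i + n - 1 = m + n" using Suc by simp
  moreover have "(m + n) mod n = m" using assms Suc by simp
  ultimately show ?thesis using Suc assms by simp
qed

lemma mod_succ_prev:
  fixes i j n :: nat
  assumes "j < n" "i = (j + 1) mod n"
  shows "j = (i + n - 1) mod n"
proof (cases "j + 1 < n")
  case True
  then have "i = j + 1" using assms by simp
  then have "i + n - 1 = j + n" by simp
  then show ?thesis using assms(1) by simp
next
  case False
  then have jn: "j + 1 = n" using assms by simp
  then have "i = 0" using assms by simp
  then have "i + n - 1 = j" using jn by simp
  then show ?thesis using assms(1) by simp
qed

lemma mod_succ_ne_prev:
  fixes i n :: nat
  assumes "i < n" "3 \<le> n"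
  shows "(i + 1) mod n \<noteq> (i + n - 1) mod n"
proof (cases i)
  case 0
  have "(i + n - 1) mod n = n - 1" using 0 assms by simp
  moreover have "(i + 1) mod n = 1" using 0 assms by simp
  ultimately show ?thesis using assms by simp
next
  case (Suc m)
  have "i + n - 1 = m + n" using Suc by simp
  then have p: "(i + n - 1) mod n = m" using assms Suc by simp
  show ?thesis
  proof (cases "i + 1 < n")
    case True then show ?thesis using p Suc by simp
  next
    case False
    then have "i + 1 = n" using assms by simp
    then show ?thesis using p assms Suc by simp
  qed
qed
lemma mod_lt_len: "j < n \<Longrightarrow> (k::nat) mod n < n"
  by (rule mod_less_divisor) simp

lemma ce_iff:
  assumes dist: "distinct H" and n3: "3 \<le> length H" and i: "i < length H"
  shows "{H ! i, u} \<in> cycle_edges H \<longleftrightarrow>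
           u = H ! ((i + 1) mod length H) \<or> u = H ! ((i + length H - 1) mod length H)"
proof
  let ?n = "length H"
  assume "{H ! i, u} \<in> cycle_edges H"
  then obtain j where j: "j < ?n" "{H ! i, u} = {H ! j, H ! ((j + 1) mod ?n)}"
    unfolding cycle_edges_def by blast
  have jn: "(j + 1) mod ?n < ?n" using j(1) by (rule mod_lt_len)
  from j(2) consider "H ! i = H ! j" "u = H ! ((j + 1) mod ?n)"
    | "H ! i = H ! ((j + 1) mod ?n)" "u = H ! j"
    by (auto simp: doubleton_eq_iff)
  then show "u = H ! ((i + 1) mod ?n) \<or> u = H ! ((i + ?n - 1) mod ?n)"
  proof cases
    case 1
    then have "i = j" using nth_eq_iff_index_eq[OF dist i j(1)] by simp
    then show ?thesis using 1 by simp
  next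
    case 2
    then have "i = (j + 1) mod ?n" using nth_eq_iff_index_eq[OF dist i jn] by simp
    then have "j = (i + ?n - 1) mod ?n" using mod_succ_prev[OF j(1)] by simp
    then show ?thesis using 2 by simp
  qed
next
  let ?n = "length H"
  assume "u = H ! ((i + 1) mod ?n) \<or> u = H ! ((i + ?n - 1) mod ?n)"
  then show "{H ! i, u} \<in> cycle_edges H"
  proof
    assume "u = H ! ((i + 1) mod ?n)"
    then show ?thesis unfolding cycle_edges_def using i by blast
  next
    assume u: "u = H ! ((i + ?n - 1) mod ?n)"
    let ?j = "(i + ?n - 1) mod ?n"
    have "?j < ?n" using i by (rule mod_lt_len)
    moreover have "{H ! i, u} = {H ! ?j, H ! ((?j + 1) mod ?n)}"
      using u mod_prev_succ[OF i] by (simp add: insert_commute)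
    ultimately show ?thesis unfolding cycle_edges_def by blast
  qed
qed

lemma closure_all:
  assumes n0: "0 < length H" and i0: "i0 < length H" "H ! i0 \<in> W"
    and cl: "\<And>i. i < length H \<Longrightarrow> H ! i \<in> W \<Longrightarrow> H ! ((i + 1) mod length H) \<in> W"
  shows "set H \<subseteq> W"
proof -
  let ?n = "length H"
  have k: "H ! ((i0 + k) mod ?n) \<in> W" for k
  proof (induction k)
    case 0 then show ?case using i0 by simp
  next
    case (Suc k)
    have "(i0 + Suc k) mod ?n = ((i0 + k) mod ?n + 1) mod ?n"
      by (simp add: mod_Suc_eq)
    moreover have "(i0 + k) mod ?n < ?n" using i0(1) by (rule mod_lt_len)
    ultimately show ?case using cl Suc by simp
  qed
  show ?thesis
  proof
    fix y assume "y \<in> set H"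
    then obtain j where j: "j < ?n" "y = H ! j" by (auto simp: in_set_conv_nth)
    have "(i0 + (j + ?n - i0)) mod ?n = j" using i0 j by simp
    then show "y \<in> W" using k[of "j + ?n - i0"] j by simp
  qed
qed

theorem mainTheorem1:
  fixes V :: "'a set" and E :: "'a \<Rightarrow> 'a \<Rightarrow> bool" and f :: "nat \<Rightarrow> 'a"
    and H :: "'a list"
  assumes graph: "simple_graph V E"
    and emb: "inj_on f S3_verts" "f ` S3_verts \<subseteq> V"
    and induced: "\<forall>i \<in> S3_verts. \<forall>j \<in> S3_verts. E (f i) (f j) \<longleftrightarrow> S3_edge i j"
    and outside: "\<exists>v \<in> V. v \<notin> f ` S3_verts"
    and boundary: "\<forall>i \<in> S3_verts. \<forall>y \<in> V. y \<notin> f ` S3_verts \<longrightarrow> E (f i) y \<longrightarrow> i \<in> S3_terminals"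
    and ham: "ham_cycle V E H"
  shows "\<exists>k \<in> {1, 2, 3}. \<exists>p. distinct p \<and> set p = f ` S3_verts \<and>
           path_edges p = {e \<in> cycle_edges H. e \<subseteq> f ` S3_verts} \<and>
           {hd p, last p} = {f (S3_in k), f (S3_out k)}"
proof -
  let ?n = "length H"
  let ?S = "S3_verts"
  have dist: "distinct H" and setH: "set H = V" and n3: "3 \<le> ?n"
    and step: "\<And>i. i < ?n \<Longrightarrow> E (H ! i) (H ! ((i + 1) mod ?n))"
    using ham unfolding ham_cycle_def by auto
  have Esym: "\<And>a b. E a b \<Longrightarrow> E b a" using graph unfolding simple_graph_def by blast
  have TS: "S3_terminals \<subseteq> ?S" by (simp add: S3_terminals_def S3_verts_def)
  have idx: "\<exists>i < ?n. H ! i = f v" if "v \<in> ?S" for v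
  proof -
    have "f v \<in> set H" using that emb(2) setH by auto
    then show ?thesis by (auto simp: in_set_conv_nth)
  qed
  have inH: "H ! j \<in> V" if "j < ?n" for j using that setH by auto
  have Eprev: "E (H ! i) (H ! ((i + ?n - 1) mod ?n))" if "i < ?n" for i
  proof -
    have "(i + ?n - 1) mod ?n < ?n" using that by (rule mod_lt_len)
    from step[OF this] have "E (H ! ((i + ?n - 1) mod ?n)) (H ! i)" using mod_prev_succ[OF that] by simp
    then show ?thesis by (rule Esym)
  qed
  have sne: "H ! ((i + 1) mod ?n) \<noteq> H ! ((i + ?n - 1) mod ?n)" if "i < ?n" for i
  proof -
    have "(i + 1) mod ?n < ?n" "(i + ?n - 1) mod ?n < ?n" using that by (rule mod_lt_len)+
    then show ?thesis using mod_succ_ne_prev[OF that n3] nth_eq_iff_index_eq[OF dist] by simp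
  qed
  define x where "x a b \<longleftrightarrow> a \<in> ?S \<and> b \<in> ?S \<and> {f a, f b} \<in> cycle_edges H" for a b
  have nb: "x v u \<longleftrightarrow> u \<in> ?S \<and> (f u = H ! ((i + 1) mod ?n) \<or> f u = H ! ((i + ?n - 1) mod ?n))"
    if "v \<in> ?S" "i < ?n" "H ! i = f v" for v u i
    using ce_iff[OF dist n3 that(2), of "f u"] that unfolding x_def by auto
  have sym: "x u v = x v u" for u v unfolding x_def by (auto simp: insert_commute)
  have adj: "S3_edge u v" if "x u v" for u v
  proof -
    have uv: "u \<in> ?S" "v \<in> ?S" "{f u, f v} \<in> cycle_edges H" using that unfolding x_def by auto
    then obtain j where j: "j < ?n" "{f u, f v} = {H ! j, H ! ((j + 1) mod ?n)}"
      unfolding cycle_edges_def by blast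
    have st: "E (H ! j) (H ! ((j + 1) mod ?n))" using step[OF j(1)] .
    from j(2) have "(f u = H ! j \<and> f v = H ! ((j + 1) mod ?n)) \<or> (f u = H ! ((j + 1) mod ?n) \<and> f v = H ! j)"
      by (simp add: doubleton_eq_iff)
    then have "E (f u) (f v)"
    proof
      assume "f u = H ! j \<and> f v = H ! ((j + 1) mod ?n)"
      then show ?thesis using st by simp
    next
      assume "f u = H ! ((j + 1) mod ?n) \<and> f v = H ! j"
      then show ?thesis using Esym[OF st] by simp
    qed
    then show ?thesis using induced uv by blast
  qed
  have adj': "x u v \<Longrightarrow> S3_edge u v" for u v by (rule adj)
  have degN: "\<exists>a b. a \<noteq> b \<and> S3_edge v a \<and> S3_edge v b \<and> (\<forall>u. S3_edge v u \<longrightarrow> (x v u \<longleftrightarrow> u = a \<or> u = b))"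
    if v: "v \<in> ?S" "v \<notin> S3_terminals" for v
  proof -
    obtain i where i: "i < ?n" "H ! i = f v" using idx[OF v(1)] by blast
    let ?s = "H ! ((i + 1) mod ?n)" and ?p = "H ! ((i + ?n - 1) mod ?n)"
    have Es: "E (f v) ?s" using step[OF i(1)] i(2) by simp
    have Ep: "E (f v) ?p" using Eprev[OF i(1)] i(2) by simp
    have "?s \<in> V" "?p \<in> V" by (rule inH, rule mod_lt_len[OF i(1)])+
    have "?s \<in> f ` ?S" using boundary v Es \<open>?s \<in> V\<close> by blast
    then obtain a where a: "a \<in> ?S" "?s = f a" by blast
    have "?p \<in> f ` ?S" using boundary v Ep \<open>?p \<in> V\<close> by blast
    then obtain b where b: "b \<in> ?S" "?p = f b" by blast
    have "a \<noteq> b" using sne[OF i(1)] a b by auto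
    moreover have "S3_edge v a" "S3_edge v b" using induced v(1) a b Es Ep by auto
    moreover have "x v u \<longleftrightarrow> u = a \<or> u = b" if "S3_edge v u" for u
    proof -
      have u: "u \<in> ?S" using S3_edge_verts[OF that] by simp
      have "x v u \<longleftrightarrow> f u = f a \<or> f u = f b" using nb[OF v(1) i, of u] u a b by simp
      also have "\<dots> \<longleftrightarrow> u = a \<or> u = b" using inj_onD[OF emb(1)] u a(1) b(1) by blast
      finally show ?thesis .
    qed
    ultimately show ?thesis by blast
  qed
  have degT: "\<exists>a b. \<forall>u. S3_edge v u \<longrightarrow> x v u \<longrightarrow> u = a \<or> u = b"
    if v: "v \<in> S3_terminals" for v
  proof -
    have vS: "v \<in> ?S" using v TS by blast
    obtain i where i: "i < ?n" "H ! i = f v" using idx[OF vS] by blast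
    let ?s = "H ! ((i + 1) mod ?n)" and ?p = "H ! ((i + ?n - 1) mod ?n)"
    have "\<forall>u. S3_edge v u \<longrightarrow> x v u \<longrightarrow> u = inv_into ?S f ?s \<or> u = inv_into ?S f ?p"
    proof (intro allI impI)
      fix u assume "S3_edge v u" "x v u"
      then have u: "u \<in> ?S" "f u = ?s \<or> f u = ?p" using nb[OF vS i, of u] by auto
      then show "u = inv_into ?S f ?s \<or> u = inv_into ?S f ?p"
        using inv_into_f_f[OF emb(1) u(1)] by auto
    qed
    then show ?thesis by blast
  qed
  have cyc: False
    if C: "C \<subseteq> ?S" "C \<noteq> {}" "\<forall>w\<in>C. \<exists>a\<in>C. \<exists>b\<in>C. a \<noteq> b \<and> x w a \<and> x w b" for C
  proof -
    have cl: "H ! ((i + 1) mod ?n) \<in> f ` C" if ih: "i < ?n" "H ! i \<in> f ` C" for i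
    proof -
      obtain w where w: "w \<in> C" "H ! i = f w" using ih(2) by blast
      have wS: "w \<in> ?S" using w C(1) by blast
      obtain a b where ab: "a \<in> C" "b \<in> C" "a \<noteq> b" "x w a" "x w b" using C(3) w(1) by blast
      have abS: "a \<in> ?S" "b \<in> ?S" using ab C(1) by auto
      have fa: "f a = H ! ((i + 1) mod ?n) \<or> f a = H ! ((i + ?n - 1) mod ?n)"
        using nb[OF wS ih(1) w(2), of a] ab(4) by simp
      have fb: "f b = H ! ((i + 1) mod ?n) \<or> f b = H ! ((i + ?n - 1) mod ?n)"
        using nb[OF wS ih(1) w(2), of b] ab(5) by simp
      have "f a \<noteq> f b" using inj_onD[OF emb(1)] abS ab(3) by blast
      then have "H ! ((i + 1) mod ?n) = f a \<or> H ! ((i + 1) mod ?n) = f b" using fa fb by auto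
      then show ?thesis using ab(1,2) by blast
    qed
    obtain w0 where w0: "w0 \<in> C" using C(2) by blast
    obtain i0 where i0: "i0 < ?n" "H ! i0 = f w0" using idx[of w0] w0 C(1) by blast
    have n0: "0 < ?n" using n3 by linarith
    have "H ! i0 \<in> f ` C" using i0(2) w0 by simp
    then have "set H \<subseteq> f ` C" by (rule closure_all[OF n0 i0(1) _ cl])
    then have "V \<subseteq> f ` ?S" using setH C(1) by auto
    then show False using outside by blast
  qed
  have CP: "\<exists>k \<in> {1, 2, 3}. \<exists>L. distinct L \<and> set L = ?S \<and>
           (\<forall>a b. x a b \<longleftrightarrow> {a,b} \<in> path_edges L) \<and> {hd L, last L} = {S3_in k, S3_out k}"
    apply (rule comb_paths[of x])
    subgoal by (rule degN)
    subgoal by (rule degT)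
    subgoal by (rule sym)
    subgoal by (rule cyc)
    subgoal by (rule adj)
    done
  obtain k L where k: "k \<in> {1, 2, 3}" and L: "distinct L" "set L = ?S"
      "\<forall>a b. x a b \<longleftrightarrow> {a,b} \<in> path_edges L" "{hd L, last L} = {S3_in k, S3_out k}"
    using CP by blast
  define p where "p = map f L"
  have P1: "distinct p" unfolding p_def using L(1,2) emb(1) by (simp add: distinct_map)
  have P2: "set p = f ` ?S" unfolding p_def using L(2) by simp
  have P3: "path_edges p = {e \<in> cycle_edges H. e \<subseteq> f ` ?S}"
  proof (rule set_eqI, rule iffI)
    fix e assume "e \<in> path_edges p"
    then obtain e' where e': "e' \<in> path_edges L" "e = f ` e'" unfolding p_def path_edges_map by blast
    then obtain a b where "e' = {a, b}" unfolding path_edges_def by blast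
    then have "x a b" using L(3) e'(1) by blast
    then show "e \<in> {e \<in> cycle_edges H. e \<subseteq> f ` ?S}"
      using e'(2) \<open>e' = {a, b}\<close> unfolding x_def by auto
  next
    fix e assume e: "e \<in> {e \<in> cycle_edges H. e \<subseteq> f ` ?S}"
    then obtain j where j: "j < ?n" "e = {H ! j, H ! ((j + 1) mod ?n)}"
      unfolding cycle_edges_def by blast
    have "H ! j \<in> f ` ?S" "H ! ((j + 1) mod ?n) \<in> f ` ?S" using e j by auto
    then obtain a b where ab: "a \<in> ?S" "b \<in> ?S" "H ! j = f a" "H ! ((j + 1) mod ?n) = f b" by blast
    have ef: "e = {f a, f b}" using j ab by simp
    then have "x a b" using e ab unfolding x_def by simp
    then have "{a, b} \<in> path_edges L" using L(3) by blast
    moreover have "e = f ` {a, b}" using ef by simp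
    ultimately show "e \<in> path_edges p" unfolding p_def path_edges_map by (rule rev_image_eqI)
  qed
  have P4: "{hd p, last p} = {f (S3_in k), f (S3_out k)}"
  proof -
    have "L \<noteq> []" using L(2) by (auto simp: S3_verts_def)
    then have "{hd p, last p} = f ` {hd L, last L}" unfolding p_def by (simp add: hd_map last_map)
    then show ?thesis using L(4) by simp
  qed
  show ?thesis
    by (rule bexI[OF exI[of _ p] k]) (intro conjI; fact P1 P2 P3 P4)
qed

end
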